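(* Define the $\mathbf{z}$-dependent $4N\times4N$ matrix $A(\mathbf{z}):=M\,\mathrm{adj}(\mathbb{I}_{2N}-U(\mathbf{z}))\,M^{*}$. Then: (1) its entries are polynomials in $\mathbf{z}$; (2) if $\mathbf{z}\in\Sigma^{\mathrm{sing}}(\Gamma)$, then $A(\mathbf{z})=0$; (3) if $\mathbf{z}\in\Sigma^{\mathrm{reg}}(\Gamma)$, then for any $\mathbf{x}\neq0$ with $(\mathbf{z},\mathbf{x})\in\mathcal{T}(\Gamma)$, $A(\mathbf{z})=c_{\mathbf{z},\mathbf{x}}\,\mathbf{x}\mathbf{x}^{*}$ for some $c_{\mathbf{z},\mathbf{x}}\in\mathbb{C}\setminus\{0\}$.
   Context: $\Gamma$ is a finite graph with $N$ edges with standard vertex conditions. $S$ is its real orthogonal $2N\times2N$ bond scattering matrix, $U(\mathbf{z})=\mathrm{diag}(\mathbf{z},\mathbf{z})S$, $J=\begin{pmatrix}0&\mathbb{I}_N\\ \mathbb{I}_N&0\end{pmatrix}$, $M=\begin{pmatrix}S+J\\ i(S-J)\end{pmatrix}$, $\mathbb{I}_m$ the $m\times m$ identity, and $\mathrm{adj}$ the adjugate matrix. $P_\Gamma(\mathbf{z})=\det(\mathbb{I}_{2N}-U(\mathbf{z}))$; the secular manifold is $\Sigma(\Gamma)=\{\mathbf{z}\in\mathbb{T}^N:P_\Gamma(\mathbf{z})=0\}$, with $\Sigma^{\mathrm{sing}}(\Gamma)$ the points where also $\nabla P_\Gamma=0$ and $\Sigma^{\mathrm{reg}}(\Gamma)$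 those where $\nabla P_\Gamma\neq0$. The trace space $\mathcal{T}(\Gamma)\subset\mathbb{T}^N\times\mathbb{C}^{4N}$ is the set of pairs $(\exp(ik\boldsymbol{\ell}),\mathrm{tr}_k(f))$ over eigenpairs $(k^2,f)$ of $(\Gamma,\boldsymbol{\ell})$, $\boldsymbol{\ell}\in\mathbb{R}_+^N$, where $\mathrm{tr}_k(f)=(\gamma_D(f),\tfrac1k\gamma_N(f))$ is the scale-invariant trace. *)

theory Defs
  imports "HOL-Analysis.Analysis" "Jordan_Normal_Form.Determinant"
          "Jordan_Normal_Form.Schur_Decomposition"
begin

text \<open>A finite graph with N edges 0..N-1; edge e runs from vertex orig e to vertex tgt e
  (multigraphs and loops allowed).  Directed bonds are 0..2N-1: bond b < N is edge b
  traversed from orig b to tgt b, bond N+e is edge e traversed backwards.\<close>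

definition bond_edge :: "nat \<Rightarrow> nat \<Rightarrow> nat" where
  "bond_edge N b = (if b < N then b else b - N)"

definition bond_start :: "(nat \<Rightarrow> 'v) \<Rightarrow> (nat \<Rightarrow> 'v) \<Rightarrow> nat \<Rightarrow> nat \<Rightarrow> 'v" where
  "bond_start orig tgt N b = (if b < N then orig b else tgt (b - N))"

definition bond_end :: "(nat \<Rightarrow> 'v) \<Rightarrow> (nat \<Rightarrow> 'v) \<Rightarrow> nat \<Rightarrow> nat \<Rightarrow> 'v" where
  "bond_end orig tgt N b = (if b < N then tgt b else orig (b - N))"

definition bond_rev :: "nat \<Rightarrow> nat \<Rightarrow> nat" where
  "bond_rev N b = (if b < N then b + N else b - N)"

text \<open>degree of a vertex = number of bonds starting there (a loop counts twice)\<close>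
definition vdeg :: "(nat \<Rightarrow> 'v) \<Rightarrow> (nat \<Rightarrow> 'v) \<Rightarrow> nat \<Rightarrow> 'v \<Rightarrow> nat" where
  "vdeg orig tgt N v = card {b. b < 2*N \<and> bond_start orig tgt N b = v}"

text \<open>Bond scattering matrix for standard (Neumann-Kirchhoff) vertex conditions:
  S(b,c) = 2/deg(v) - delta(b, reverse c) if c ends at the vertex v where b starts, else 0.\<close>
definition scat :: "(nat \<Rightarrow> 'v) \<Rightarrow> (nat \<Rightarrow> 'v) \<Rightarrow> nat \<Rightarrow> complex mat" where
  "scat orig tgt N = mat (2*N) (2*N) (\<lambda>(b,c).
     if bond_end orig tgt N c = bond_start orig tgt N b
     then complex_of_real (2 / real (vdeg orig tgt N (bond_start orig tgt N b))
                            - (if b = bond_rev N c then 1 else 0))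
     else 0)"

definition Jmat :: "nat \<Rightarrow> complex mat" where
  "Jmat N = mat (2*N) (2*N) (\<lambda>(b,c). if c = bond_rev N b then 1 else 0)"

definition Umat :: "(nat \<Rightarrow> 'v) \<Rightarrow> (nat \<Rightarrow> 'v) \<Rightarrow> nat \<Rightarrow> (nat \<Rightarrow> complex) \<Rightarrow> complex mat" where
  "Umat orig tgt N z = mat (2*N) (2*N) (\<lambda>(b,c). z (bond_edge N b) * scat orig tgt N $$ (b,c))"

definition secular_poly :: "(nat \<Rightarrow> 'v) \<Rightarrow> (nat \<Rightarrow> 'v) \<Rightarrow> nat \<Rightarrow> (nat \<Rightarrow> complex) \<Rightarrow> complex" where
  "secular_poly orig tgt N z = det (1\<^sub>m (2*N) - Umat orig tgt N z)"

definition Mmat :: "(nat \<Rightarrow> 'v) \<Rightarrow> (nat \<Rightarrow> 'v) \<Rightarrow> nat \<Rightarrow> complex mat" where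
  "Mmat orig tgt N = mat (4*N) (2*N) (\<lambda>(r,c).
     if r < 2*N then scat orig tgt N $$ (r,c) + Jmat N $$ (r,c)
     else \<i> * (scat orig tgt N $$ (r - 2*N, c) - Jmat N $$ (r - 2*N, c)))"

definition Amat :: "(nat \<Rightarrow> 'v) \<Rightarrow> (nat \<Rightarrow> 'v) \<Rightarrow> nat \<Rightarrow> (nat \<Rightarrow> complex) \<Rightarrow> complex mat" where
  "Amat orig tgt N z = Mmat orig tgt N * adj_mat (1\<^sub>m (2*N) - Umat orig tgt N z)
                         * mat_adjoint (Mmat orig tgt N)"

definition torus :: "nat \<Rightarrow> (nat \<Rightarrow> complex) set" where
  "torus N = {z. \<forall>e<N. norm (z e) = 1}"

definition pderiv_z :: "((nat \<Rightarrow> complex) \<Rightarrow> complex) \<Rightarrow> nat \<Rightarrow> (nat \<Rightarrow> complex) \<Rightarrow> complex" where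
  "pderiv_z P e z = deriv (\<lambda>w. P (z(e := w))) (z e)"

definition sigma_sing :: "(nat \<Rightarrow> 'v) \<Rightarrow> (nat \<Rightarrow> 'v) \<Rightarrow> nat \<Rightarrow> (nat \<Rightarrow> complex) set" where
  "sigma_sing orig tgt N = {z \<in> torus N. secular_poly orig tgt N z = 0 \<and>
      (\<forall>e<N. pderiv_z (secular_poly orig tgt N) e z = 0)}"

definition sigma_reg :: "(nat \<Rightarrow> 'v) \<Rightarrow> (nat \<Rightarrow> 'v) \<Rightarrow> nat \<Rightarrow> (nat \<Rightarrow> complex) set" where
  "sigma_reg orig tgt N = {z \<in> torus N. secular_poly orig tgt N z = 0 \<and>
      (\<exists>e<N. pderiv_z (secular_poly orig tgt N) e z \<noteq> 0)}"

definition poly_fun :: "nat \<Rightarrow> ((nat \<Rightarrow> complex) \<Rightarrow> complex) \<Rightarrow> bool" where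
  "poly_fun N g \<longleftrightarrow> (\<exists>(d::nat) (c :: (nat \<Rightarrow> nat) \<Rightarrow> complex). \<forall>z.
      g z = (\<Sum>\<alpha>\<in>{\<alpha>. (\<forall>i. \<alpha> i \<le> d) \<and> (\<forall>i\<ge>N. \<alpha> i = 0)}. c \<alpha> * (\<Prod>i<N. z i ^ \<alpha> i)))"

text \<open>Eigenfunction of the standard Laplacian on the metric graph with edge lengths l and
  eigenvalue k^2: f e is a function on [0, l e], df e its derivative.\<close>
definition bond_val :: "nat \<Rightarrow> (nat \<Rightarrow> real) \<Rightarrow> (nat \<Rightarrow> real \<Rightarrow> complex) \<Rightarrow> nat \<Rightarrow> complex" where
  "bond_val N l f b = (if b < N then f b 0 else f (b - N) (l (b - N)))"

text \<open>derivative at the start of bond b, in the direction into the edge (outgoing)\<close>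
definition bond_outder :: "nat \<Rightarrow> (nat \<Rightarrow> real) \<Rightarrow> (nat \<Rightarrow> real \<Rightarrow> complex) \<Rightarrow> nat \<Rightarrow> complex" where
  "bond_outder N l df b = (if b < N then df b 0 else - df (b - N) (l (b - N)))"

definition is_eigenpair :: "(nat \<Rightarrow> 'v) \<Rightarrow> (nat \<Rightarrow> 'v) \<Rightarrow> nat \<Rightarrow> (nat \<Rightarrow> real) \<Rightarrow> real
    \<Rightarrow> (nat \<Rightarrow> real \<Rightarrow> complex) \<Rightarrow> (nat \<Rightarrow> real \<Rightarrow> complex) \<Rightarrow> bool" where
  "is_eigenpair orig tgt N l k f df \<longleftrightarrow>
     (\<forall>e<N. \<forall>x\<in>{0..l e}.
        (f e has_vector_derivative df e x) (at x within {0..l e}) \<and>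
        (df e has_vector_derivative (- complex_of_real (k^2) * f e x)) (at x within {0..l e})) \<and>
     (\<forall>b<2*N. \<forall>c<2*N. bond_start orig tgt N b = bond_start orig tgt N c \<longrightarrow>
        bond_val N l f b = bond_val N l f c) \<and>
     (\<forall>v. (\<Sum>b\<in>{b. b < 2*N \<and> bond_start orig tgt N b = v}. bond_outder N l df b) = 0) \<and>
     (\<exists>e<N. \<exists>x\<in>{0..l e}. f e x \<noteq> 0)"

text \<open>scale-invariant trace (gamma_D f, gamma_N f / k) as a vector in C^(4N)\<close>
definition trace_vec :: "nat \<Rightarrow> (nat \<Rightarrow> real) \<Rightarrow> real
    \<Rightarrow> (nat \<Rightarrow> real \<Rightarrow> complex) \<Rightarrow> (nat \<Rightarrow> real \<Rightarrow> complex) \<Rightarrow> complex vec" where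
  "trace_vec N l k f df = vec (4*N) (\<lambda>r. if r < 2*N then bond_val N l f r
                                      else bond_outder N l df (r - 2*N) / complex_of_real k)"

definition trace_space :: "(nat \<Rightarrow> 'v) \<Rightarrow> (nat \<Rightarrow> 'v) \<Rightarrow> nat \<Rightarrow> ((nat \<Rightarrow> complex) \<times> complex vec) set" where
  "trace_space orig tgt N = {(z, x). \<exists>l k f df.
      (\<forall>e<N. l e > 0) \<and> k > 0 \<and> is_eigenpair orig tgt N l k f df \<and>
      (\<forall>e<N. z e = exp (\<i> * complex_of_real (k * l e))) \<and>
      x = trace_vec N l k f df}"

end

theory Submission
  imports Defs
begin

definition mono_z :: "nat \<Rightarrow> (nat \<Rightarrow> nat) \<Rightarrow> (nat \<Rightarrow> complex) \<Rightarrow> complex" where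
  "mono_z N \<alpha> z = (\<Prod>i<N. z i ^ \<alpha> i)"

definition Sd :: "nat \<Rightarrow> nat \<Rightarrow> (nat \<Rightarrow> nat) set" where
  "Sd N d = {\<alpha>. (\<forall>i. \<alpha> i \<le> d) \<and> (\<forall>i\<ge>N. \<alpha> i = 0)}"

lemma finite_Sd: "finite (Sd N d)"
proof -
  have "Sd N d \<subseteq> (\<lambda>f i. if i < N then f i else 0) ` ({0..<N} \<rightarrow>\<^sub>E {0..d})"
  proof
    fix \<alpha> assume a: "\<alpha> \<in> Sd N d"
    show "\<alpha> \<in> (\<lambda>f i. if i < N then f i else 0) ` ({0..<N} \<rightarrow>\<^sub>E {0..d})"
    proof (rule image_eqI[of _ _ "restrict \<alpha> {0..<N}"])
      show "\<alpha> = (\<lambda>i. if i < N then restrict \<alpha> {0..<N} i else 0)"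
        using a by (auto simp: Sd_def)
      show "restrict \<alpha> {0..<N} \<in> {0..<N} \<rightarrow>\<^sub>E {0..d}" using a by (auto simp: Sd_def)
    qed
  qed
  moreover have "finite ({0..<N} \<rightarrow>\<^sub>E {0..d::nat})" by (intro finite_PiE) auto
  ultimately show ?thesis by (meson finite_imageI finite_subset)
qed

lemma poly_fun_alt: "poly_fun N g \<longleftrightarrow> (\<exists>d c. \<forall>z. g z = (\<Sum>\<alpha>\<in>Sd N d. c \<alpha> * mono_z N \<alpha> z))"
  unfolding poly_fun_def Sd_def mono_z_def by simp

lemma poly_fun_gen:
  fixes I :: "'i set" and \<alpha> :: "'i \<Rightarrow> nat \<Rightarrow> nat"
  assumes fin: "finite I" and supp: "\<And>i j. i \<in> I \<Longrightarrow> j \<ge> N \<Longrightarrow> \<alpha> i j = 0"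
    and eq: "\<And>z. g z = (\<Sum>i\<in>I. c i * mono_z N (\<alpha> i) z)"
  shows "poly_fun N g"
proof -
  define d where "d = (\<Sum>i\<in>I. \<Sum>j<N. \<alpha> i j)"
  have inS: "\<alpha> i \<in> Sd N d" if "i \<in> I" for i
  proof -
    have "\<alpha> i j \<le> d" for j
    proof (cases "j < N")
      case True
      have "\<alpha> i j \<le> (\<Sum>j<N. \<alpha> i j)" by (rule member_le_sum) (use True in auto)
      also have "\<dots> \<le> d" unfolding d_def by (rule member_le_sum) (use that fin in auto)
      finally show ?thesis .
    next
      case False then show ?thesis using supp[OF that] by simp
    qed
    then show ?thesis using supp[OF that] by (auto simp: Sd_def)
  qed
  define C where "C \<beta> = (\<Sum>i\<in>{i\<in>I. \<alpha> i = \<beta>}. c i)" for \<beta>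
  have "g z = (\<Sum>\<beta>\<in>Sd N d. C \<beta> * mono_z N \<beta> z)" for z
  proof -
    have "(\<Sum>\<beta>\<in>Sd N d. C \<beta> * mono_z N \<beta> z) = (\<Sum>\<beta>\<in>Sd N d. \<Sum>i\<in>{i\<in>I. \<alpha> i = \<beta>}. c i * mono_z N (\<alpha> i) z)"
      unfolding C_def sum_distrib_right by (intro sum.cong) auto
    also have "\<dots> = (\<Sum>i\<in>I. c i * mono_z N (\<alpha> i) z)"
      by (rule sum.group) (use fin finite_Sd inS in auto)
    finally show ?thesis using eq by simp
  qed
  then show ?thesis unfolding poly_fun_alt by blast
qed

lemma poly_fun_const: "poly_fun N (\<lambda>z. a)"
  by (rule poly_fun_gen[of "{()}" _ "\<lambda>_ _. 0" _ "\<lambda>_. a"]) (auto simp: mono_z_def)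

lemma poly_fun_var: assumes "e < N" shows "poly_fun N (\<lambda>z. z e)"
proof (rule poly_fun_gen[of "{()}" _ "\<lambda>_ j. if j = e then 1 else 0" _ "\<lambda>_. 1"])
  fix z :: "nat \<Rightarrow> complex"
  have "mono_z N (\<lambda>j. if j = e then 1 else 0) z = (\<Prod>i<N. if i = e then z i else 1)"
    unfolding mono_z_def by (intro prod.cong) auto
  also have "\<dots> = z e" using assms by (subst prod.delta) auto
  finally show "z e = (\<Sum>i\<in>{()}. 1 * mono_z N (\<lambda>j. if j = e then 1 else 0) z)" by simp
qed (use assms in auto)

lemma poly_fun_add: assumes "poly_fun N f" "poly_fun N g" shows "poly_fun N (\<lambda>z. f z + g z)"
proof -
  obtain d1 c1 where 1: "\<And>z. f z = (\<Sum>\<alpha>\<in>Sd N d1. c1 \<alpha> * mono_z N \<alpha> z)" using assms(1) unfolding poly_fun_alt by blast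
  obtain d2 c2 where 2: "\<And>z. g z = (\<Sum>\<alpha>\<in>Sd N d2. c2 \<alpha> * mono_z N \<alpha> z)" using assms(2) unfolding poly_fun_alt by blast
  show ?thesis
  proof (rule poly_fun_gen[of "Sd N d1 <+> Sd N d2" _ "case_sum id id" _ "case_sum c1 c2"])
    show "finite (Sd N d1 <+> Sd N d2)" using finite_Sd by auto
    show "\<And>i j. i \<in> Sd N d1 <+> Sd N d2 \<Longrightarrow> N \<le> j \<Longrightarrow> case_sum id id i j = 0"
      by (auto simp: Sd_def)
    show "\<And>z. f z + g z = (\<Sum>i\<in>Sd N d1 <+> Sd N d2. case_sum c1 c2 i * mono_z N (case_sum id id i) z)"
      by (simp add: sum.Plus finite_Sd 1 2 comp_def)
  qed
qed

lemma mono_z_add: "mono_z N (\<lambda>j. a j + b j) z = mono_z N a z * mono_z N b z"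
  unfolding mono_z_def by (simp add: power_add prod.distrib)

lemma poly_fun_mult: assumes "poly_fun N f" "poly_fun N g" shows "poly_fun N (\<lambda>z. f z * g z)"
proof -
  obtain d1 c1 where 1: "\<And>z. f z = (\<Sum>\<alpha>\<in>Sd N d1. c1 \<alpha> * mono_z N \<alpha> z)" using assms(1) unfolding poly_fun_alt by blast
  obtain d2 c2 where 2: "\<And>z. g z = (\<Sum>\<alpha>\<in>Sd N d2. c2 \<alpha> * mono_z N \<alpha> z)" using assms(2) unfolding poly_fun_alt by blast
  show ?thesis
  proof (rule poly_fun_gen[of "Sd N d1 \<times> Sd N d2" _ "\<lambda>(a,b) j. a j + b j" _ "\<lambda>(a,b). c1 a * c2 b"])
    show "finite (Sd N d1 \<times> Sd N d2)" using finite_Sd by auto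
    show "\<And>i j. i \<in> Sd N d1 \<times> Sd N d2 \<Longrightarrow> N \<le> j \<Longrightarrow> (\<lambda>(a,b) j. a j + b j) i j = 0"
      by (auto simp: Sd_def)
    fix z
    have "f z * g z = (\<Sum>a\<in>Sd N d1. \<Sum>b\<in>Sd N d2. (c1 a * mono_z N a z) * (c2 b * mono_z N b z))"
      unfolding 1 2 sum_product ..
    also have "\<dots> = (\<Sum>(a,b)\<in>Sd N d1 \<times> Sd N d2. (c1 a * mono_z N a z) * (c2 b * mono_z N b z))"
      by (rule sum.cartesian_product)
    also have "\<dots> = (\<Sum>i\<in>Sd N d1 \<times> Sd N d2. (\<lambda>(a,b). c1 a * c2 b) i * mono_z N ((\<lambda>(a,b) j. a j + b j) i) z)"
      by (intro sum.cong) (auto simp: mono_z_add)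
    finally show "f z * g z = \<dots>" .
  qed
qed

lemma poly_fun_sum: assumes "finite A" "\<And>a. a \<in> A \<Longrightarrow> poly_fun N (f a)"
  shows "poly_fun N (\<lambda>z. \<Sum>a\<in>A. f a z)"
  using assms by (induction A rule: finite_induct) (auto intro: poly_fun_add poly_fun_const)

lemma poly_fun_prod: assumes "finite A" "\<And>a. a \<in> A \<Longrightarrow> poly_fun N (f a)"
  shows "poly_fun N (\<lambda>z. \<Prod>a\<in>A. f a z)"
  using assms by (induction A rule: finite_induct) (auto intro: poly_fun_mult poly_fun_const)

lemma poly_fun_minus: assumes "poly_fun N f" "poly_fun N g" shows "poly_fun N (\<lambda>z. f z - g z)"
proof -
  have "poly_fun N (\<lambda>z. f z + (-1) * g z)"
    by (intro poly_fun_add poly_fun_mult poly_fun_const assms)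
  then show ?thesis by simp
qed

lemma mult_entry: assumes "A \<in> carrier_mat n m" "B \<in> carrier_mat m p" "i < n" "j < p"
  shows "(A * B) $$ (i,j) = (\<Sum>k<m. A $$ (i,k) * B $$ (k,j))"
  using assms by (auto simp: scalar_prod_def intro!: sum.cong)

lemma adjoint_entry: assumes "A \<in> carrier_mat n m" "i < m" "j < n"
  shows "mat_adjoint A $$ (i,j) = cnj (A $$ (j,i))"
  using assms by (simp add: mat_adjoint_def mat_of_rows_def)

lemma adjoint_carrier: assumes "A \<in> carrier_mat n m" shows "mat_adjoint A \<in> carrier_mat m n"
  using assms by (simp add: mat_adjoint_def mat_of_rows_def)

lemma bond_edge_lt: "b < 2*N \<Longrightarrow> bond_edge N b < N"
  by (auto simp: bond_edge_def)

lemma scat_carrier: "scat orig tgt N \<in> carrier_mat (2*N) (2*N)"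
  by (simp add: scat_def)
lemma Umat_carrier: "Umat orig tgt N z \<in> carrier_mat (2*N) (2*N)"
  by (simp add: Umat_def)
lemma Mmat_carrier: "Mmat orig tgt N \<in> carrier_mat (4*N) (2*N)"
  by (simp add: Mmat_def)
lemma B_carrier: "1\<^sub>m (2*N) - Umat orig tgt N z \<in> carrier_mat (2*N) (2*N)"
  using Umat_carrier[of orig tgt N z] by auto

lemma B_entry: assumes "r < 2*N" "c < 2*N"
  shows "(1\<^sub>m (2*N) - Umat orig tgt N z) $$ (r,c) =
     (if r = c then 1 else 0) - z (bond_edge N r) * scat orig tgt N $$ (r,c)"
  using assms by (simp add: Umat_def)

lemma poly_B_entry: assumes "r < 2*N" "c < 2*N"
  shows "poly_fun N (\<lambda>z. (1\<^sub>m (2*N) - Umat orig tgt N z) $$ (r,c))"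
  unfolding B_entry[OF assms]
  by (intro poly_fun_minus poly_fun_mult poly_fun_const poly_fun_var bond_edge_lt assms)

lemma adj_entry: assumes "A \<in> carrier_mat n n" "a < n" "b < n"
  shows "adj_mat A $$ (a,b) = cofactor A b a"
  using assms by (simp add: adj_mat_def)

lemma poly_adj_entry: assumes "a < 2*N" "b < 2*N"
  shows "poly_fun N (\<lambda>z. adj_mat (1\<^sub>m (2*N) - Umat orig tgt N z) $$ (a,b))"
proof -
  let ?B = "\<lambda>z. 1\<^sub>m (2*N) - Umat orig tgt N z"
  let ?n = "2*N - 1"
  have md: "mat_delete (?B z) b a \<in> carrier_mat ?n ?n" for z
    using mat_delete_carrier[OF B_carrier] by blast
  have ent: "poly_fun N (\<lambda>z. mat_delete (?B z) b a $$ (i, j))" if "i < ?n" "j < ?n" for i j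
  proof -
    have "mat_delete (?B z) b a $$ (i, j) = ?B z $$ (if i < b then i else Suc i, if j < a then j else Suc j)" for z
      using that by (simp add: mat_delete_def Umat_def)
    moreover have "poly_fun N (\<lambda>z. ?B z $$ (if i < b then i else Suc i, if j < a then j else Suc j))"
      by (rule poly_B_entry) (use that assms in auto)
    ultimately show ?thesis by simp
  qed
  have "adj_mat (?B z) $$ (a,b) = (-1)^(b+a) * (\<Sum>p\<in>{p. p permutes {0..<?n}}.
          signof p * (\<Prod>i = 0..<?n. mat_delete (?B z) b a $$ (i, p i)))" for z
    by (simp add: adj_entry[OF B_carrier assms] cofactor_def det_def'[OF md])
  moreover have "poly_fun N (\<lambda>z. (-1)^(b+a) * (\<Sum>p\<in>{p. p permutes {0..<?n}}.
          signof p * (\<Prod>i = 0..<?n. mat_delete (?B z) b a $$ (i, p i))))"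
  proof (intro poly_fun_mult poly_fun_const poly_fun_sum poly_fun_prod)
    show "finite {p. p permutes {0..<?n}}" by (simp add: finite_permutations)
    fix p i assume "p \<in> {p. p permutes {0..<?n}}" "i \<in> {0..<?n}"
    then show "poly_fun N (\<lambda>z. mat_delete (?B z) b a $$ (i, p i))"
      by (intro ent) (auto simp: permutes_in_image)
  qed auto
  ultimately show ?thesis by simp
qed

lemma Amat_entry: assumes "i < 4*N" "j < 4*N"
  shows "Amat orig tgt N z $$ (i,j) = (\<Sum>b<2*N. (\<Sum>a<2*N. Mmat orig tgt N $$ (i,a) *
     adj_mat (1\<^sub>m (2*N) - Umat orig tgt N z) $$ (a,b)) * cnj (Mmat orig tgt N $$ (j,b)))"
proof -
  have adjc: "adj_mat (1\<^sub>m (2*N) - Umat orig tgt N z) \<in> carrier_mat (2*N) (2*N)"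
    using adj_mat(1)[OF B_carrier] by blast
  have MA: "Mmat orig tgt N * adj_mat (1\<^sub>m (2*N) - Umat orig tgt N z) \<in> carrier_mat (4*N) (2*N)"
    by (rule mult_carrier_mat[OF Mmat_carrier adjc])
  show ?thesis unfolding Amat_def
    using assms
    by (simp add: mult_entry[OF MA adjoint_carrier[OF Mmat_carrier]] mult_entry[OF Mmat_carrier adjc]
       adjoint_entry[OF Mmat_carrier])
qed

lemma part1: "\<forall>i<4*N. \<forall>j<4*N. poly_fun N (\<lambda>z. Amat orig tgt N z $$ (i,j))"
proof (intro allI impI)
  fix i j assume ij: "i < 4*N" "j < 4*N"
  show "poly_fun N (\<lambda>z. Amat orig tgt N z $$ (i,j))"
    unfolding Amat_entry[OF ij]
    by (intro poly_fun_sum poly_fun_mult poly_fun_const poly_adj_entry finite_lessThan) auto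
qed

lemma rev_lt: "b < 2*N \<Longrightarrow> bond_rev N b < 2*N" by (auto simp: bond_rev_def)
lemma rev_rev: "b < 2*N \<Longrightarrow> bond_rev N (bond_rev N b) = b" by (auto simp: bond_rev_def)
lemma start_rev: "b < 2*N \<Longrightarrow> bond_start orig tgt N (bond_rev N b) = bond_end orig tgt N b"
  by (auto simp: bond_rev_def bond_start_def bond_end_def)
lemma end_rev: "b < 2*N \<Longrightarrow> bond_end orig tgt N (bond_rev N b) = bond_start orig tgt N b"
  by (auto simp: bond_rev_def bond_start_def bond_end_def)
lemma edge_rev: "b < 2*N \<Longrightarrow> bond_edge N (bond_rev N b) = bond_edge N b"
  by (auto simp: bond_rev_def bond_edge_def)
lemma rev_eq_iff: "a < 2*N \<Longrightarrow> b < 2*N \<Longrightarrow> (a = bond_rev N b) = (b = bond_rev N a)"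
  using rev_rev by metis
lemma rev_inj: "a < 2*N \<Longrightarrow> b < 2*N \<Longrightarrow> (bond_rev N a = bond_rev N b) = (a = b)"
  using rev_rev by metis

definition Kin :: "(nat \<Rightarrow> 'v) \<Rightarrow> (nat \<Rightarrow> 'v) \<Rightarrow> nat \<Rightarrow> 'v \<Rightarrow> nat set" where
  "Kin orig tgt N v = {k. k < 2*N \<and> bond_end orig tgt N k = v}"
definition Kout :: "(nat \<Rightarrow> 'v) \<Rightarrow> (nat \<Rightarrow> 'v) \<Rightarrow> nat \<Rightarrow> 'v \<Rightarrow> nat set" where
  "Kout orig tgt N v = {k. k < 2*N \<and> bond_start orig tgt N k = v}"

lemma Kin_image: "Kin orig tgt N v = bond_rev N ` Kout orig tgt N v"
proof
  show "Kin orig tgt N v \<subseteq> bond_rev N ` Kout orig tgt N v"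
  proof
    fix k assume k: "k \<in> Kin orig tgt N v"
    then have "bond_rev N k \<in> Kout orig tgt N v" "k = bond_rev N (bond_rev N k)"
      by (auto simp: Kin_def Kout_def rev_lt start_rev rev_rev)
    then show "k \<in> bond_rev N ` Kout orig tgt N v" by blast
  qed
  show "bond_rev N ` Kout orig tgt N v \<subseteq> Kin orig tgt N v"
    by (auto simp: Kin_def Kout_def rev_lt end_rev)
qed

lemma rev_inj_on: "inj_on (bond_rev N) (Kout orig tgt N v)"
  by (rule inj_onI) (auto simp: Kout_def rev_inj)

lemma card_Kin: "card (Kin orig tgt N v) = vdeg orig tgt N v"
  unfolding Kin_image card_image[OF rev_inj_on] by (simp add: Kout_def vdeg_def)

lemma sum_Kin: "(\<Sum>k\<in>Kin orig tgt N v. g k) = (\<Sum>b\<in>Kout orig tgt N v. g (bond_rev N b))"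
  unfolding Kin_image by (simp add: sum.reindex[OF rev_inj_on])

definition sr :: "(nat \<Rightarrow> 'v) \<Rightarrow> (nat \<Rightarrow> 'v) \<Rightarrow> nat \<Rightarrow> nat \<Rightarrow> nat \<Rightarrow> real" where
  "sr orig tgt N b c = (if bond_end orig tgt N c = bond_start orig tgt N b
     then 2 / real (vdeg orig tgt N (bond_start orig tgt N b)) - (if b = bond_rev N c then 1 else 0) else 0)"

lemma scat_entry: "b < 2*N \<Longrightarrow> c < 2*N \<Longrightarrow> scat orig tgt N $$ (b,c) = complex_of_real (sr orig tgt N b c)"
  by (simp add: scat_def sr_def)

lemma sr_orth: assumes i: "i < 2*N" and j: "j < 2*N"
  shows "(\<Sum>k<2*N. sr orig tgt N i k * sr orig tgt N j k) = (if i = j then 1 else 0)"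
proof (cases "bond_start orig tgt N i = bond_start orig tgt N j")
  case False
  then show ?thesis by (auto simp: sr_def intro!: sum.neutral)
next
  case True
  define v where "v = bond_start orig tgt N i"
  define d where "d = real (vdeg orig tgt N v)"
  let ?K = "Kin orig tgt N v"
  have riK: "bond_rev N i \<in> ?K" and rjK: "bond_rev N j \<in> ?K"
    using i j True by (auto simp: Kin_def v_def rev_lt end_rev)
  have finK: "finite ?K" by (simp add: Kin_def)
  have cardK: "card ?K = vdeg orig tgt N v" by (rule card_Kin)
  have d0: "d > 0" unfolding d_def cardK[symmetric] using finK riK card_gt_0_iff by fastforce
  have "(\<Sum>k<2*N. sr orig tgt N i k * sr orig tgt N j k) =
     (\<Sum>k\<in>?K. sr orig tgt N i k * sr orig tgt N j k)"
    by (rule sum.mono_neutral_right) (auto simp: Kin_def sr_def v_def)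
  also have "\<dots> = (\<Sum>k\<in>?K. (2/d - (if k = bond_rev N i then 1 else 0)) * (2/d - (if k = bond_rev N j then 1 else 0)))"
  proof (rule sum.cong[OF refl])
    fix k assume k: "k \<in> ?K"
    then have k2: "k < 2*N" and ek: "bond_end orig tgt N k = v" by (auto simp: Kin_def)
    show "sr orig tgt N i k * sr orig tgt N j k = (2/d - (if k = bond_rev N i then 1 else 0)) * (2/d - (if k = bond_rev N j then 1 else 0))"
      using k2 ek i j True rev_eq_iff[of i N k] rev_eq_iff[of j N k]
      by (simp add: sr_def v_def d_def)
  qed
  also have "\<dots> = (\<Sum>k\<in>?K. 4/d^2 - (if k = bond_rev N j then 2/d else 0) - (if k = bond_rev N i then 2/d else 0)
       + (if i = j then (if k = bond_rev N i then 1 else 0) else 0))"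
    using rev_inj[OF i j] by (intro sum.cong) (auto simp: power2_eq_square algebra_simps)
  also have "\<dots> = card ?K * (4/d^2) - 2/d - 2/d + (if i = j then 1 else 0)"
    using finK riK rjK
    by (simp add: sum.distrib sum_subtractf sum.delta)
  also have "\<dots> = (if i = j then 1 else 0)"
    using d0 by (simp add: cardK d_def[symmetric] power2_eq_square field_simps)
  finally show ?thesis .
qed

lemma adj_replace: assumes A: "A \<in> carrier_mat n n" and b: "b \<in> carrier_vec n" and k: "k < n"
  shows "(adj_mat A *\<^sub>v b) $ k = det (replace_col A b k)"
proof -
  have Ab: "replace_col A b k \<in> carrier_mat n n" using A by (auto simp: replace_col_def)
  have "(adj_mat A *\<^sub>v b) $ k = row (adj_mat A) k \<bullet> b" using adj_mat[OF A] b k by auto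
  also have "\<dots> = det (replace_col A b k)" unfolding scalar_prod_def using b k A
    by (subst laplace_expansion_column[OF Ab k], auto intro!: sum.cong arg_cong[of _ _ det] 
      arg_cong[of _ _ "\<lambda> x. _ * x"] eq_matI
      simp: replace_col_def adj_mat_def Matrix.row_def cofactor_def mat_delete_def ac_simps)
  finally show ?thesis .
qed

lemma adj_zero:
  fixes B :: "complex mat"
  assumes B: "B \<in> carrier_mat n n" and q: "q \<in> carrier_vec n" "q \<noteq> 0\<^sub>v n" "B *\<^sub>v q = 0\<^sub>v n"
    and v: "v \<in> carrier_vec n" "B *\<^sub>v v = 0\<^sub>v n" "\<forall>t. v \<noteq> t \<cdot>\<^sub>v q"
  shows "adj_mat B = 0\<^sub>m n n"
proof -
  have wex: "\<exists>w. w \<in> carrier_vec n \<and> w \<noteq> 0\<^sub>v n \<and> B *\<^sub>v w = 0\<^sub>v n \<and> w $ k = 0" if k: "k < n" for k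
  proof (cases "q $ k = 0")
    case True then show ?thesis using q by blast
  next
    case False
    define w where "w = q $ k \<cdot>\<^sub>v v - v $ k \<cdot>\<^sub>v q"
    have wc: "w \<in> carrier_vec n" using q v by (simp add: w_def)
    have "B *\<^sub>v w = q $ k \<cdot>\<^sub>v (B *\<^sub>v v) - v $ k \<cdot>\<^sub>v (B *\<^sub>v q)"
      unfolding w_def using B q v
      by (simp add: mult_minus_distrib_mat_vec mult_mat_vec)
    then have Bw: "B *\<^sub>v w = 0\<^sub>v n" using q v by auto
    have wk: "w $ k = 0" using k q v by (simp add: w_def)
    have "w \<noteq> 0\<^sub>v n"
    proof
      assume w0: "w = 0\<^sub>v n"
      have "v = (v $ k / q $ k) \<cdot>\<^sub>v q"
      proof (rule eq_vecI)
        fix i assume i: "i < dim_vec ((v $ k / q $ k) \<cdot>\<^sub>v q)"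
        then have "w $ i = 0" using w0 q by simp
        then have "q $ k * v $ i - v $ k * q $ i = 0" using i q v by (simp add: w_def)
        then show "v $ i = ((v $ k / q $ k) \<cdot>\<^sub>v q) $ i" using i q False
          by (simp add: field_simps)
      qed (use q v in auto)
      then show False using v by blast
    qed
    then show ?thesis using wc Bw wk by blast
  qed
  have "adj_mat B $$ (k, j) = 0" if kj: "k < n" "j < n" for k j
  proof -
    obtain w where w: "w \<in> carrier_vec n" "w \<noteq> 0\<^sub>v n" "B *\<^sub>v w = 0\<^sub>v n" "w $ k = 0"
      using wex[OF kj(1)] by blast
    let ?b = "unit_vec n j :: complex vec"
    have R: "replace_col B ?b k \<in> carrier_mat n n" using B by (auto simp: replace_col_def)
    have "replace_col B ?b k *\<^sub>v w = B *\<^sub>v w"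
    proof (rule eq_vecI)
      fix i assume i: "i < dim_vec (B *\<^sub>v w)"
      have "(replace_col B ?b k *\<^sub>v w) $ i = (\<Sum>l<n. (if l = k then ?b $ i else B $$ (i,l)) * w $ l)"
        using i B w by (auto simp: replace_col_def scalar_prod_def intro!: sum.cong)
      also have "\<dots> = (\<Sum>l<n. B $$ (i,l) * w $ l)"
        using w(4) by (intro sum.cong) auto
      also have "\<dots> = (B *\<^sub>v w) $ i" using i B w(1) by (auto simp: scalar_prod_def intro!: sum.cong)
      finally show "(replace_col B ?b k *\<^sub>v w) $ i = (B *\<^sub>v w) $ i" .
    qed (use B in \<open>auto simp: replace_col_def\<close>)
    then have "det (replace_col B ?b k) = 0"
      using det_0_iff_vec_prod_zero[OF R] w by auto
    then have "(adj_mat B *\<^sub>v ?b) $ k = 0" using adj_replace[OF B _ kj(1)] by simp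
    moreover have "(adj_mat B *\<^sub>v ?b) $ k = adj_mat B $$ (k, j)"
      using adj_mat(1)[OF B] kj by simp
    ultimately show ?thesis by simp
  qed
  then show ?thesis using adj_mat(1)[OF B] by (intro eq_matI) auto
qed

lemma zsm1: "(0::'a::comm_ring_1) \<cdot>\<^sub>m 1\<^sub>m n = 0\<^sub>m n n"
  by (intro eq_matI) auto

lemma adj_rank1:
  fixes B :: "complex mat"
  assumes B: "B \<in> carrier_mat n n" "det B = 0"
   and q: "q \<in> carrier_vec n" "q \<noteq> 0\<^sub>v n"
   and span: "\<forall>v \<in> carrier_vec n. B *\<^sub>v v = 0\<^sub>v n \<longrightarrow> (\<exists>t. v = t \<cdot>\<^sub>v q)"
   and adjk: "\<forall>v \<in> carrier_vec n. mat_adjoint B *\<^sub>v v = 0\<^sub>v n \<longrightarrow> B *\<^sub>v v = 0\<^sub>v n"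
  shows "\<exists>\<gamma>. \<forall>i<n. \<forall>j<n. adj_mat B $$ (i,j) = \<gamma> * q$i * cnj (q$j)"
proof -
  define X where "X = adj_mat B"
  have X: "X \<in> carrier_mat n n" unfolding X_def using adj_mat(1)[OF B(1)] .
  have BX: "B * X = 0\<^sub>m n n" unfolding X_def using adj_mat(2)[OF B(1)] B(2) zsm1 by simp
  have XB: "X * B = 0\<^sub>m n n" unfolding X_def using adj_mat(3)[OF B(1)] B(2) zsm1 by simp
  have "\<exists>t. vec n (\<lambda>i. X $$ (i,j)) = t \<cdot>\<^sub>v q" if j: "j < n" for j
  proof -
    have "B *\<^sub>v vec n (\<lambda>i. X $$ (i,j)) = 0\<^sub>v n"
    proof (rule eq_vecI)
      fix i assume i: "i < dim_vec (0\<^sub>v n :: complex vec)"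
      have "(B *\<^sub>v vec n (\<lambda>i. X $$ (i,j))) $ i = (\<Sum>l<n. B $$ (i,l) * X $$ (l,j))"
        using i B by (auto simp: scalar_prod_def intro!: sum.cong)
      also have "\<dots> = (B * X) $$ (i,j)" using mult_entry[OF B(1) X, of i j] i j by simp
      finally show "(B *\<^sub>v vec n (\<lambda>i. X $$ (i,j))) $ i = (0\<^sub>v n :: complex vec) $ i"
        using BX i j by simp
    qed (use B in auto)
    then show ?thesis using span by auto
  qed
  then obtain c where c: "\<And>j. j < n \<Longrightarrow> vec n (\<lambda>i. X $$ (i,j)) = c j \<cdot>\<^sub>v q" by metis
  have "\<exists>t. vec n (\<lambda>l. cnj (X $$ (i,l))) = t \<cdot>\<^sub>v q" if i: "i < n" for i
  proof -
    have "mat_adjoint B *\<^sub>v vec n (\<lambda>l. cnj (X $$ (i,l))) = 0\<^sub>v n"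
    proof (rule eq_vecI)
      fix k assume k: "k < dim_vec (0\<^sub>v n :: complex vec)"
      have "(mat_adjoint B *\<^sub>v vec n (\<lambda>l. cnj (X $$ (i,l)))) $ k = (\<Sum>l<n. cnj (B $$ (l,k)) * cnj (X $$ (i,l)))"
        using k B adjoint_carrier[OF B(1)] adjoint_entry[OF B(1)]
        by (auto simp: scalar_prod_def intro!: sum.cong)
      also have "\<dots> = cnj (\<Sum>l<n. X $$ (i,l) * B $$ (l,k))" by (simp add: mult.commute)
      also have "(\<Sum>l<n. X $$ (i,l) * B $$ (l,k)) = (X * B) $$ (i,k)" using mult_entry[OF X B(1), of i k] i k by simp
      finally show "(mat_adjoint B *\<^sub>v vec n (\<lambda>l. cnj (X $$ (i,l)))) $ k = (0\<^sub>v n :: complex vec) $ k"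
        using XB i k by simp
    qed (use B adjoint_carrier[OF B(1)] in auto)
    then show ?thesis using span adjk by auto
  qed
  then obtain d where d: "\<And>i. i < n \<Longrightarrow> vec n (\<lambda>l. cnj (X $$ (i,l))) = d i \<cdot>\<^sub>v q" by metis
  obtain k where k: "k < n" "q $ k \<noteq> 0"
    using q by (metis carrier_vecD eq_vecI index_zero_vec(1) index_zero_vec(2))
  have Xc: "X $$ (i,j) = c j * q $ i" if "i < n" "j < n" for i j
    using arg_cong[OF c[OF that(2)], of "\<lambda>v. v $ i"] that q by simp
  have Xd: "cnj (X $$ (i,j)) = d i * q $ j" if "i < n" "j < n" for i j
    using arg_cong[OF d[OF that(1)], of "\<lambda>v. v $ j"] that q by simp
  define \<gamma> where "\<gamma> = cnj (d k) / q $ k"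
  have "X $$ (i,j) = \<gamma> * q$i * cnj (q$j)" if ij: "i < n" "j < n" for i j
  proof -
    have "c j * q $ k = cnj (d k) * cnj (q $ j)"
      using Xc[OF k(1) ij(2)] Xd[OF k(1) ij(2)]
      by (metis complex_cnj_cnj complex_cnj_mult)
    then have "c j = cnj (d k) * cnj (q $ j) / q $ k" using k(2) by (simp add: field_simps)
    then show ?thesis using Xc[OF ij] by (simp add: \<gamma>_def field_simps)
  qed
  then show ?thesis unfolding X_def by blast
qed

lemma det_replace_row:
  fixes B C :: "'a::comm_ring_1 mat"
  assumes B: "B \<in> carrier_mat n n" and C: "C \<in> carrier_mat n n" and i: "i < n"
  shows "(\<Sum>p\<in>{p. p permutes {0..<n}}. signof p * (C $$ (i, p i) * (\<Prod>j\<in>{0..<n}-{i}. B $$ (j, p j))))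
     = (\<Sum>j<n. C $$ (i,j) * cofactor B i j)"
proof -
  define R where "R = mat n n (\<lambda>(a,b). if a = i then C $$ (a,b) else B $$ (a,b))"
  have R: "R \<in> carrier_mat n n" by (simp add: R_def)
  have "det R = (\<Sum>p\<in>{p. p permutes {0..<n}}. signof p * (\<Prod>a = 0..<n. R $$ (a, p a)))"
    by (rule det_def'[OF R])
  also have "\<dots> = (\<Sum>p\<in>{p. p permutes {0..<n}}. signof p * (C $$ (i, p i) * (\<Prod>j\<in>{0..<n}-{i}. B $$ (j, p j))))"
  proof (rule sum.cong[OF refl])
    fix p assume "p \<in> {p. p permutes {0..<n}}"
    then have p: "p permutes {0..<n}" by simp
    have pi: "\<And>a. a < n \<Longrightarrow> p a < n" using p permutes_in_image by fastforce
    have "(\<Prod>a = 0..<n. R $$ (a, p a)) = R $$ (i, p i) * (\<Prod>a\<in>{0..<n}-{i}. R $$ (a, p a))"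
      by (rule prod.remove) (use i in auto)
    also have "(\<Prod>a\<in>{0..<n}-{i}. R $$ (a, p a)) = (\<Prod>a\<in>{0..<n}-{i}. B $$ (a, p a))"
      by (intro prod.cong) (auto simp: R_def pi)
    finally show "signof p * (\<Prod>a = 0..<n. R $$ (a, p a)) = signof p * (C $$ (i, p i) * (\<Prod>j\<in>{0..<n}-{i}. B $$ (j, p j)))"
      using i pi by (simp add: R_def)
  qed
  finally have 1: "det R = \<dots>" .
  have "det R = (\<Sum>j<n. R $$ (i,j) * cofactor R i j)" by (rule laplace_expansion_row[OF R i])
  also have "\<dots> = (\<Sum>j<n. C $$ (i,j) * cofactor B i j)"
  proof (rule sum.cong[OF refl])
    fix j assume j: "j \<in> {..<n}"
    have "mat_delete R i j = mat_delete B i j"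
      using B i by (intro eq_matI) (auto simp: mat_delete_def R_def)
    then show "R $$ (i,j) * cofactor R i j = C $$ (i,j) * cofactor B i j"
      using i j by (simp add: cofactor_def R_def)
  qed
  finally show ?thesis using 1 by simp
qed

lemma jacobi:
  fixes B C :: "complex mat"
  assumes B: "B \<in> carrier_mat n n" and C: "C \<in> carrier_mat n n"
  shows "((\<lambda>w. det (mat n n (\<lambda>(i,j). B $$ (i,j) + (w - w0) * C $$ (i,j))))
     has_field_derivative (\<Sum>i<n. \<Sum>j<n. C $$ (i,j) * cofactor B i j)) (at w0)"
proof -
  let ?P = "{p. p permutes {0..<n}}"
  have pi: "\<And>p a. p \<in> ?P \<Longrightarrow> a < n \<Longrightarrow> p a < n" using permutes_in_image by fastforce
  have F: "(\<lambda>w. det (mat n n (\<lambda>(i,j). B $$ (i,j) + (w - w0) * C $$ (i,j)))) =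
     (\<lambda>w. \<Sum>p\<in>?P. signof p * (\<Prod>i\<in>{0..<n}. B $$ (i,p i) + (w - w0) * C $$ (i,p i)))"
    by (rule ext, subst det_def'[of _ n]) (auto intro!: sum.cong prod.cong simp: pi)
  have D: "((\<lambda>w. \<Sum>p\<in>?P. signof p * (\<Prod>i\<in>{0..<n}. B $$ (i,p i) + (w - w0) * C $$ (i,p i)))
     has_field_derivative (\<Sum>p\<in>?P. signof p * (\<Sum>i\<in>{0..<n}. C $$ (i, p i) *
        (\<Prod>j\<in>{0..<n}-{i}. B $$ (j,p j) + (w0 - w0) * C $$ (j,p j))))) (at w0)"
    by (intro DERIV_sum DERIV_cmult has_field_derivative_prod) (auto intro!: derivative_eq_intros)
  have "(\<Sum>p\<in>?P. signof p * (\<Sum>i\<in>{0..<n}. C $$ (i, p i) *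
        (\<Prod>j\<in>{0..<n}-{i}. B $$ (j,p j) + (w0 - w0) * C $$ (j,p j)))) =
        (\<Sum>i\<in>{0..<n}. \<Sum>p\<in>?P. signof p * (C $$ (i, p i) * (\<Prod>j\<in>{0..<n}-{i}. B $$ (j,p j))))"
    by (simp add: sum_distrib_left sum.swap[of _ ?P])
  also have "\<dots> = (\<Sum>i<n. \<Sum>j<n. C $$ (i,j) * cofactor B i j)"
    by (simp add: det_replace_row[OF B C] lessThan_atLeast0)
  finally show ?thesis using D F by simp
qed

lemma mv_entry: assumes "A \<in> carrier_mat n m" "v \<in> carrier_vec m" "i < n"
  shows "(A *\<^sub>v v) $ i = (\<Sum>j<m. A $$ (i,j) * v $ j)"
  using assms by (auto simp: scalar_prod_def intro!: sum.cong)

abbreviation Bm where "Bm orig tgt N z \<equiv> 1\<^sub>m (2*N) - Umat orig tgt N z"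

definition Cm :: "(nat \<Rightarrow> 'v) \<Rightarrow> (nat \<Rightarrow> 'v) \<Rightarrow> nat \<Rightarrow> nat \<Rightarrow> complex mat" where
  "Cm orig tgt N e = mat (2*N) (2*N) (\<lambda>(i,j). if bond_edge N i = e then - scat orig tgt N $$ (i,j) else 0)"

lemma pderiv_formula:
  assumes e: "e < N"
  shows "pderiv_z (secular_poly orig tgt N) e z =
    (\<Sum>i<2*N. \<Sum>j<2*N. Cm orig tgt N e $$ (i,j) * cofactor (Bm orig tgt N z) i j)"
proof -
  have eqf: "(\<lambda>w. secular_poly orig tgt N (z(e := w))) =
     (\<lambda>w. det (mat (2*N) (2*N) (\<lambda>(i,j). Bm orig tgt N z $$ (i,j) + (w - z e) * Cm orig tgt N e $$ (i,j))))"
  proof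
    fix w
    have "1\<^sub>m (2*N) - Umat orig tgt N (z(e := w)) =
       mat (2*N) (2*N) (\<lambda>(i,j). Bm orig tgt N z $$ (i,j) + (w - z e) * Cm orig tgt N e $$ (i,j))"
      by (intro eq_matI) (auto simp: Umat_def Cm_def algebra_simps)
    then show "secular_poly orig tgt N (z(e := w)) = det (mat (2*N) (2*N) (\<lambda>(i,j). Bm orig tgt N z $$ (i,j) + (w - z e) * Cm orig tgt N e $$ (i,j)))"
      by (simp add: secular_poly_def)
  qed
  have Cc: "Cm orig tgt N e \<in> carrier_mat (2*N) (2*N)" by (simp add: Cm_def)
  show ?thesis unfolding pderiv_z_def eqf
    by (rule DERIV_imp_deriv[OF jacobi[OF B_carrier Cc]])
qed

lemma pderiv_adj0:
  assumes e: "e < N" and X: "adj_mat (Bm orig tgt N z) = 0\<^sub>m (2*N) (2*N)"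
  shows "pderiv_z (secular_poly orig tgt N) e z = 0"
proof -
  have "cofactor (Bm orig tgt N z) i j = 0" if "i < 2*N" "j < 2*N" for i j
    using arg_cong[OF X, of "\<lambda>M. M $$ (j,i)"] adj_entry[OF B_carrier[of N orig tgt z] that(2) that(1)] that by simp
  then show ?thesis unfolding pderiv_formula[OF e] by (auto intro!: sum.neutral)
qed

lemma pderiv_rank1:
  assumes e: "e < N"
    and X: "\<forall>i<2*N. \<forall>j<2*N. adj_mat (Bm orig tgt N z) $$ (i,j) = \<gamma> * q$i * cnj (q$j)"
    and q: "q \<in> carrier_vec (2*N)" "Bm orig tgt N z *\<^sub>v q = 0\<^sub>v (2*N)"
  shows "z e * pderiv_z (secular_poly orig tgt N) e z =
     - \<gamma> * (\<Sum>i\<in>{i. i < 2*N \<and> bond_edge N i = e}. q$i * cnj (q$i))"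
proof -
  have qi: "q$i = z (bond_edge N i) * (\<Sum>j<2*N. scat orig tgt N $$ (i,j) * q$j)" if i: "i < 2*N" for i
  proof -
    have "(Bm orig tgt N z *\<^sub>v q) $ i = 0" using q(2) i by simp
    moreover have "(Bm orig tgt N z *\<^sub>v q) $ i = (\<Sum>j<2*N. Bm orig tgt N z $$ (i,j) * q$j)"
      by (rule mv_entry[OF B_carrier q(1) i])
    moreover have "(\<Sum>j<2*N. Bm orig tgt N z $$ (i,j) * q$j) =
        (\<Sum>j<2*N. (if i = j then q$j else 0) - z (bond_edge N i) * (scat orig tgt N $$ (i,j) * q$j))"
    proof (intro sum.cong refl)
      fix j assume "j \<in> {..<2*N}"
      then have j: "j < 2*N" by simp
      show "Bm orig tgt N z $$ (i,j) * q$j = (if i = j then q$j else 0) - z (bond_edge N i) * (scat orig tgt N $$ (i,j) * q$j)"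
        unfolding B_entry[OF i j] by (simp add: algebra_simps)
    qed
    moreover have "\<dots> = q$i - z (bond_edge N i) * (\<Sum>j<2*N. scat orig tgt N $$ (i,j) * q$j)"
      using i by (simp add: sum_subtractf sum_distrib_left)
    ultimately show ?thesis using i by simp
  qed
  have "pderiv_z (secular_poly orig tgt N) e z =
      (\<Sum>i<2*N. \<Sum>j<2*N. Cm orig tgt N e $$ (i,j) * (\<gamma> * q$j * cnj (q$i)))"
    unfolding pderiv_formula[OF e]
    by (intro sum.cong refl) (simp add: adj_entry[OF B_carrier, symmetric] X)
  also have "\<dots> = (\<Sum>i<2*N. if bond_edge N i = e then - \<gamma> * cnj (q$i) * (\<Sum>j<2*N. scat orig tgt N $$ (i,j) * q$j) else 0)"
    by (intro sum.cong refl) (auto simp: Cm_def sum_distrib_left algebra_simps intro!: sum.cong)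
  finally have "z e * pderiv_z (secular_poly orig tgt N) e z =
      (\<Sum>i<2*N. if bond_edge N i = e then - \<gamma> * cnj (q$i) * (z e * (\<Sum>j<2*N. scat orig tgt N $$ (i,j) * q$j)) else 0)"
    by (simp add: sum_distrib_left algebra_simps if_distrib cong: if_cong)
  also have "\<dots> = (\<Sum>i<2*N. if bond_edge N i = e then - \<gamma> * (q$i * cnj (q$i)) else 0)"
    by (intro sum.cong refl) (auto simp: qi[symmetric])
  also have "\<dots> = - \<gamma> * (\<Sum>i\<in>{i. i < 2*N \<and> bond_edge N i = e}. q$i * cnj (q$i))"
    by (simp add: sum.If_cases sum_distrib_left lessThan_def Collect_conj_eq Int_commute)
  finally show ?thesis .
qed

lemma pderiv_nonzero:
  assumes X: "\<forall>i<2*N. \<forall>j<2*N. adj_mat (Bm orig tgt N z) $$ (i,j) = \<gamma> * q$i * cnj (q$j)"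
    and q: "q \<in> carrier_vec (2*N)" "Bm orig tgt N z *\<^sub>v q = 0\<^sub>v (2*N)" "q \<noteq> 0\<^sub>v (2*N)"
    and g: "\<gamma> \<noteq> 0"
  shows "\<exists>e<N. pderiv_z (secular_poly orig tgt N) e z \<noteq> 0"
proof -
  obtain i0 where i0: "i0 < 2*N" "q $ i0 \<noteq> 0"
    using q by (metis carrier_vecD eq_vecI index_zero_vec(1) index_zero_vec(2))
  define e where "e = bond_edge N i0"
  have e: "e < N" unfolding e_def by (rule bond_edge_lt[OF i0(1)])
  let ?I = "{i. i < 2*N \<and> bond_edge N i = e}"
  have "(\<Sum>i\<in>?I. q$i * cnj (q$i)) = complex_of_real (\<Sum>i\<in>?I. (cmod (q$i))^2)"
    unfolding of_real_sum by (intro sum.cong refl) (rule complex_norm_square[symmetric])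
  moreover have "(\<Sum>i\<in>?I. (cmod (q$i))^2) > 0"
  proof -
    have "(\<Sum>i\<in>?I. (cmod (q$i))^2) \<ge> (cmod (q$i0))^2"
      by (rule member_le_sum) (use i0 e_def in auto)
    moreover have "(cmod (q$i0))^2 > 0" using i0 by simp
    ultimately show ?thesis by linarith
  qed
  ultimately have "(\<Sum>i\<in>?I. q$i * cnj (q$i)) \<noteq> 0" by (metis of_real_eq_0_iff less_irrefl)
  then have "z e * pderiv_z (secular_poly orig tgt N) e z \<noteq> 0"
    unfolding pderiv_rank1[OF e X q(1,2)] using g by simp
  then show ?thesis using e by auto
qed

lemma U_entry: "i < 2*N \<Longrightarrow> j < 2*N \<Longrightarrow> Umat orig tgt N z $$ (i,j) = z (bond_edge N i) * complex_of_real (sr orig tgt N i j)"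
  by (simp add: Umat_def scat_entry)

lemma U_unit: assumes z: "z \<in> torus N" and i: "i < 2*N" and j: "j < 2*N"
  shows "(\<Sum>k<2*N. Umat orig tgt N z $$ (i,k) * cnj (Umat orig tgt N z $$ (j,k))) = (if i = j then 1 else 0)"
proof -
  have "(\<Sum>k<2*N. Umat orig tgt N z $$ (i,k) * cnj (Umat orig tgt N z $$ (j,k))) =
     (\<Sum>k<2*N. (z (bond_edge N i) * cnj (z (bond_edge N j))) * complex_of_real (sr orig tgt N i k * sr orig tgt N j k))"
    by (intro sum.cong refl) (simp add: U_entry i j)
  also have "\<dots> = (z (bond_edge N i) * cnj (z (bond_edge N j))) * complex_of_real (\<Sum>k<2*N. sr orig tgt N i k * sr orig tgt N j k)"
    by (simp add: sum_distrib_left of_real_sum)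
  also have "\<dots> = (z (bond_edge N i) * cnj (z (bond_edge N j))) * complex_of_real (if i = j then 1 else 0)"
    unfolding sr_orth[OF i j] ..
  also have "\<dots> = (if i = j then 1 else 0)"
  proof (cases "i = j")
    case True
    have "cmod (z (bond_edge N i)) = 1" using z bond_edge_lt[OF i] by (simp add: torus_def)
    then have "z (bond_edge N i) * cnj (z (bond_edge N i)) = 1"
      using complex_norm_square[of "z (bond_edge N i)"] by simp
    then show ?thesis using True by simp
  next
    case False then show ?thesis by simp
  qed
  finally show ?thesis .
qed

lemma adjker: assumes z: "z \<in> torus N"
  shows "\<forall>v\<in>carrier_vec (2*N). mat_adjoint (Bm orig tgt N z) *\<^sub>v v = 0\<^sub>v (2*N) \<longrightarrow> Bm orig tgt N z *\<^sub>v v = 0\<^sub>v (2*N)"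
proof (intro ballI impI)
  fix v :: "complex vec" assume v: "v \<in> carrier_vec (2*N)" and h: "mat_adjoint (Bm orig tgt N z) *\<^sub>v v = 0\<^sub>v (2*N)"
  let ?u = "\<lambda>i j. Umat orig tgt N z $$ (i,j)"
  have Bc: "Bm orig tgt N z \<in> carrier_mat (2*N) (2*N)" by (rule B_carrier)
  have vk: "v$k = (\<Sum>j<2*N. cnj (?u j k) * v$j)" if k: "k < 2*N" for k
  proof -
    have "(mat_adjoint (Bm orig tgt N z) *\<^sub>v v) $ k = (\<Sum>j<2*N. mat_adjoint (Bm orig tgt N z) $$ (k,j) * v$j)"
      by (rule mv_entry[OF adjoint_carrier[OF Bc] v k])
    also have "\<dots> = (\<Sum>j<2*N. (if j = k then v$j else 0) - cnj (?u j k) * v$j)"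
    proof (intro sum.cong refl)
      fix j assume "j \<in> {..<2*N}" then have j: "j < 2*N" by simp
      show "mat_adjoint (Bm orig tgt N z) $$ (k,j) * v$j = (if j = k then v$j else 0) - cnj (?u j k) * v$j"
        unfolding adjoint_entry[OF Bc k j] B_entry[OF j k] by (simp add: U_entry[OF j k] scat_entry[OF j k] algebra_simps)
    qed
    also have "\<dots> = v$k - (\<Sum>j<2*N. cnj (?u j k) * v$j)" using k by (simp add: sum_subtractf)
    finally show ?thesis using h k by simp
  qed
  show "Bm orig tgt N z *\<^sub>v v = 0\<^sub>v (2*N)"
  proof (rule eq_vecI)
    fix i assume "i < dim_vec (0\<^sub>v (2*N) :: complex vec)"
    then have i: "i < 2*N" by simp
    have "(Bm orig tgt N z *\<^sub>v v) $ i = (\<Sum>k<2*N. Bm orig tgt N z $$ (i,k) * v$k)"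
      by (rule mv_entry[OF Bc v i])
    also have "\<dots> = (\<Sum>k<2*N. (if i = k then v$k else 0) - ?u i k * v$k)"
    proof (intro sum.cong refl)
      fix k assume "k \<in> {..<2*N}" then have k: "k < 2*N" by simp
      show "Bm orig tgt N z $$ (i,k) * v$k = (if i = k then v$k else 0) - ?u i k * v$k"
        unfolding B_entry[OF i k] by (simp add: U_entry[OF i k] scat_entry[OF i k] algebra_simps)
    qed
    also have "\<dots> = v$i - (\<Sum>k<2*N. ?u i k * v$k)" using i by (simp add: sum_subtractf)
    also have "(\<Sum>k<2*N. ?u i k * v$k) = (\<Sum>k<2*N. \<Sum>j<2*N. ?u i k * cnj (?u j k) * v$j)"
    proof (intro sum.cong refl)
      fix k assume "k \<in> {..<2*N}" then have k: "k < 2*N" by simp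
      show "?u i k * v$k = (\<Sum>j<2*N. ?u i k * cnj (?u j k) * v$j)"
        by (subst vk[OF k]) (simp add: sum_distrib_left mult.assoc)
    qed
    also have "\<dots> = (\<Sum>j<2*N. v$j * (\<Sum>k<2*N. ?u i k * cnj (?u j k)))"
      by (subst sum.swap) (simp add: sum_distrib_left algebra_simps)
    also have "\<dots> = (\<Sum>j<2*N. if i = j then v$j else 0)"
      by (intro sum.cong refl) (simp add: U_unit[OF z i])
    also have "\<dots> = v$i" using i by simp
    finally show "(Bm orig tgt N z *\<^sub>v v) $ i = (0\<^sub>v (2*N) :: complex vec) $ i" using i by simp
  qed (use Bc in auto)
qed

lemma ode_const:
  fixes F D :: "real \<Rightarrow> complex" and s t :: complex
  assumes der: "\<forall>x\<in>{0..L}. (F has_vector_derivative D x) (at x within {0..L}) \<and>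
      (D has_vector_derivative (- complex_of_real (k^2) * F x)) (at x within {0..L})"
  and st: "s * t = -1" "s = t * complex_of_real (k^2)"
  and L: "0 \<le> L"
  shows "exp (s * of_real L) * (F L + t * D L) = F 0 + t * D 0"
proof -
  define G where "G = (\<lambda>x. exp (s * of_real x) * (F x + t * D x))"
  have "(G has_vector_derivative 0) (at x within {0..L})" if x: "x \<in> {0..L}" for x
  proof -
    have e: "((\<lambda>x. exp (s * of_real x)) has_vector_derivative s * exp (s * of_real x)) (at x within {0..L})"
    proof (rule has_vector_derivative_real_field[of "\<lambda>w. exp (s*w)" "s * exp (s * of_real x)" x "{0..L}"])
      show "((\<lambda>w. exp (s*w)) has_field_derivative s * exp (s * of_real x)) (at (of_real x))"
        by (rule derivative_eq_intros refl | simp)+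
    qed
    have fd: "((\<lambda>x. F x + t * D x) has_vector_derivative (D x + t * (- complex_of_real (k^2) * F x))) (at x within {0..L})"
      using der x by (intro has_vector_derivative_add has_vector_derivative_mult_right) auto
    have "(G has_vector_derivative (exp (s * of_real x) * (D x + t * (- complex_of_real (k^2) * F x)) +
        s * exp (s * of_real x) * (F x + t * D x))) (at x within {0..L})"
      unfolding G_def by (rule has_vector_derivative_mult[OF e fd])
    moreover have "exp (s * of_real x) * (D x + t * (- complex_of_real (k^2) * F x)) +
        s * exp (s * of_real x) * (F x + t * D x) = exp (s * of_real x) * ((1 + s * t) * D x + (s - t * complex_of_real (k^2)) * F x)"
      by (simp add: algebra_simps)
    moreover have "\<dots> = 0" using st by simp
    ultimately show ?thesis by simp
  qed
  then obtain c where c: "\<And>x. x \<in> {0..L} \<Longrightarrow> G x = c"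
    using has_vector_derivative_zero_constant[of "{0..L}" G] by (metis convex_real_interval(5))
  have "G L = G 0" using c L by simp
  then show ?thesis by (simp add: G_def)
qed

definition wvec :: "nat \<Rightarrow> (nat \<Rightarrow> real) \<Rightarrow> real \<Rightarrow> (nat \<Rightarrow> real \<Rightarrow> complex) \<Rightarrow> (nat \<Rightarrow> real \<Rightarrow> complex) \<Rightarrow> complex vec" where
  "wvec N l k f df = vec (2*N) (\<lambda>c. (bond_val N l f (bond_rev N c) + \<i> * (bond_outder N l df (bond_rev N c) / complex_of_real k)) / 2)"

lemma vertex_rel:
  assumes eig: "is_eigenpair orig tgt N l k f df" and r: "r < 2*N"
  shows "(\<Sum>c<2*N. scat orig tgt N $$ (r,c) * wvec N l k f df $ c) =
     (bond_val N l f r - \<i> * (bond_outder N l df r / complex_of_real k)) / 2"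
proof -
  define pv where "pv b = bond_val N l f b" for b
  define qv where "qv b = bond_outder N l df b / complex_of_real k" for b
  define w where "w = wvec N l k f df"
  define v where "v = bond_start orig tgt N r"
  let ?K = "Kin orig tgt N v"
  let ?O = "Kout orig tgt N v"
  define d where "d = real (vdeg orig tgt N v)"
  have wc: "w $ c = (pv (bond_rev N c) + \<i> * qv (bond_rev N c)) / 2" if "c < 2*N" for c
    using that by (simp add: w_def wvec_def pv_def qv_def)
  have finK: "finite ?K" "finite ?O" by (auto simp: Kin_def Kout_def)
  have rO: "r \<in> ?O" using r by (simp add: Kout_def v_def)
  have rK: "bond_rev N r \<in> ?K" using r by (simp add: Kin_def v_def rev_lt end_rev)
  have cardO: "card ?O = vdeg orig tgt N v" by (simp add: Kout_def vdeg_def)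
  have d0: "d \<noteq> 0" unfolding d_def cardO[symmetric] using finK rO by (metis card_0_eq empty_iff of_nat_0_eq_iff)
  have C: "\<forall>b<2*N. \<forall>c<2*N. bond_start orig tgt N b = bond_start orig tgt N c \<longrightarrow>
        bond_val N l f b = bond_val N l f c"
    and Kf: "\<forall>v. (\<Sum>b\<in>{b. b < 2*N \<and> bond_start orig tgt N b = v}. bond_outder N l df b) = 0"
    using eig unfolding is_eigenpair_def by blast+
  have cont: "pv b = pv r" if "b \<in> ?O" for b
    using C that r unfolding pv_def Kout_def v_def by blast
  have kir: "(\<Sum>b\<in>?O. bond_outder N l df b) = 0"
    using Kf unfolding Kout_def by blast
  have "(\<Sum>c<2*N. scat orig tgt N $$ (r,c) * w $ c) = (\<Sum>c\<in>?K. scat orig tgt N $$ (r,c) * w $ c)"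
    by (rule sum.mono_neutral_right) (auto simp: Kin_def scat_entry r sr_def v_def)
  also have "\<dots> = (\<Sum>c\<in>?K. (2/d) * w $ c - (if c = bond_rev N r then w $ c else 0))"
  proof (intro sum.cong refl)
    fix c assume c: "c \<in> ?K"
    then have c2: "c < 2*N" and ec: "bond_end orig tgt N c = v" by (auto simp: Kin_def)
    show "scat orig tgt N $$ (r,c) * w $ c = (2/d) * w $ c - (if c = bond_rev N r then w $ c else 0)"
    proof -
      have "sr orig tgt N r c = 2/d - (if c = bond_rev N r then 1 else 0)"
        using rev_eq_iff[OF r c2] by (simp add: sr_def ec v_def[symmetric] d_def)
      then have X: "scat orig tgt N $$ (r,c) = complex_of_real (2/d - (if c = bond_rev N r then 1 else 0))"
        unfolding scat_entry[OF r c2] by simp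
      show ?thesis unfolding X by (cases "c = bond_rev N r") (simp_all add: algebra_simps)
    qed
  qed
  also have "\<dots> = (2/d) * (\<Sum>c\<in>?K. w $ c) - w $ bond_rev N r"
    using finK rK by (simp add: sum_subtractf sum_distrib_left)
  also have "(\<Sum>c\<in>?K. w $ c) = (\<Sum>b\<in>?O. w $ bond_rev N b)" by (rule sum_Kin)
  also have "\<dots> = (\<Sum>b\<in>?O. (pv r + \<i> * qv b) / 2)"
    by (intro sum.cong refl) (auto simp: wc rev_lt rev_rev cont Kout_def)
  also have "\<dots> = (card ?O * pv r + \<i> * (\<Sum>b\<in>?O. qv b)) / 2"
    by (simp add: sum_divide_distrib[symmetric] sum.distrib sum_distrib_left)
  also have "(\<Sum>b\<in>?O. qv b) = 0" unfolding qv_def using kir by (simp add: sum_divide_distrib[symmetric])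
  also have "w $ bond_rev N r = (pv r + \<i> * qv r) / 2" using r by (simp add: wc rev_lt rev_rev)
  finally have "(\<Sum>c<2*N. scat orig tgt N $$ (r,c) * w $ c) = (2/d) * ((card ?O * pv r + \<i> * 0) / 2) - (pv r + \<i> * qv r) / 2" .
  also have "\<dots> = (pv r - \<i> * qv r) / 2"
  proof -
    have cd: "complex_of_nat (card ?O) = complex_of_real d" by (simp add: cardO d_def)
    show ?thesis unfolding cd using d0 by (simp add: field_simps)
  qed
  finally show ?thesis by (simp add: w_def pv_def qv_def)
qed

lemma edge_rel:
  assumes eig: "is_eigenpair orig tgt N l k f df" and lpos: "\<forall>e<N. l e > 0" and k: "k > 0"
    and z: "\<forall>e<N. z e = exp (\<i> * complex_of_real (k * l e))" and c: "c < 2*N"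
  shows "z (bond_edge N c) * ((bond_val N l f c - \<i> * (bond_outder N l df c / complex_of_real k)) / 2) = wvec N l k f df $ c"
proof -
  have der: "\<forall>e<N. \<forall>x\<in>{0..l e}. (f e has_vector_derivative df e x) (at x within {0..l e}) \<and>
        (df e has_vector_derivative (- complex_of_real (k^2) * f e x)) (at x within {0..l e})"
    using eig unfolding is_eigenpair_def by blast
  have kk: "complex_of_real k \<noteq> 0" using k by simp
  have E: "exp (\<i> * complex_of_real (k * l e)) * (f e (l e) + (\<i> / complex_of_real k) * df e (l e)) = f e 0 + (\<i> / complex_of_real k) * df e 0"
      "f e (l e) - (\<i> / complex_of_real k) * df e (l e) = exp (\<i> * complex_of_real (k * l e)) * (f e 0 - (\<i> / complex_of_real k) * df e 0)"
    if e: "e < N" for e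
  proof -
    have L: "0 \<le> l e" using lpos e by force
    have d: "\<forall>x\<in>{0..l e}. (f e has_vector_derivative df e x) (at x within {0..l e}) \<and>
        (df e has_vector_derivative (- complex_of_real (k^2) * f e x)) (at x within {0..l e})"
      using der e by blast
    have st1: "(\<i> * complex_of_real k) * (\<i> / complex_of_real k) = -1"
      using k by simp
    have st2: "\<i> * complex_of_real k = (\<i> / complex_of_real k) * complex_of_real (k^2)"
      using k by (simp add: power2_eq_square)
    have "exp ((\<i> * complex_of_real k) * of_real (l e)) * (f e (l e) + (\<i> / complex_of_real k) * df e (l e)) = f e 0 + (\<i> / complex_of_real k) * df e 0"
      by (rule ode_const[OF d st1 st2 L])
    then show "exp (\<i> * complex_of_real (k * l e)) * (f e (l e) + (\<i> / complex_of_real k) * df e (l e)) = f e 0 + (\<i> / complex_of_real k) * df e 0"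
      by (simp add: mult.assoc)
    have st3: "(- \<i> * complex_of_real k) * (- \<i> / complex_of_real k) = -1"
      using k by simp
    have st4: "- \<i> * complex_of_real k = (- \<i> / complex_of_real k) * complex_of_real (k^2)"
      using k by (simp add: power2_eq_square)
    have "exp ((- \<i> * complex_of_real k) * of_real (l e)) * (f e (l e) + (- \<i> / complex_of_real k) * df e (l e)) = f e 0 + (- \<i> / complex_of_real k) * df e 0"
      by (rule ode_const[OF d st3 st4 L])
    then have h: "exp ((- \<i> * complex_of_real k) * of_real (l e)) * (f e (l e) - (\<i> / complex_of_real k) * df e (l e)) = f e 0 - (\<i> / complex_of_real k) * df e 0"
      by simp
    have XY: "exp (\<i> * complex_of_real (k * l e)) * exp ((- \<i> * complex_of_real k) * of_real (l e)) = 1"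
      by (simp add: exp_add[symmetric] algebra_simps)
    have "f e (l e) - (\<i> / complex_of_real k) * df e (l e) =
       (exp (\<i> * complex_of_real (k * l e)) * exp ((- \<i> * complex_of_real k) * of_real (l e))) * (f e (l e) - (\<i> / complex_of_real k) * df e (l e))"
      unfolding XY by simp
    also have "\<dots> = exp (\<i> * complex_of_real (k * l e)) * (exp ((- \<i> * complex_of_real k) * of_real (l e)) * (f e (l e) - (\<i> / complex_of_real k) * df e (l e)))"
      by (simp only: mult.assoc)
    also have "\<dots> = exp (\<i> * complex_of_real (k * l e)) * (f e 0 - (\<i> / complex_of_real k) * df e 0)"
      unfolding h ..
    finally show "f e (l e) - (\<i> / complex_of_real k) * df e (l e) = exp (\<i> * complex_of_real (k * l e)) * (f e 0 - (\<i> / complex_of_real k) * df e 0)" .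
  qed
  show ?thesis
  proof (cases "c < N")
    case True
    let ?X = "exp (\<i> * complex_of_real (k * l c))"
    have zc: "z c = ?X" using z True by simp
    have w: "wvec N l k f df $ c = (f c (l c) + \<i> * (- df c (l c) / complex_of_real k)) / 2"
      using True c by (simp add: wvec_def bond_rev_def bond_val_def bond_outder_def)
    have lhs: "z (bond_edge N c) * ((bond_val N l f c - \<i> * (bond_outder N l df c / complex_of_real k)) / 2)
        = z c * ((f c 0 - \<i> * (df c 0 / complex_of_real k)) / 2)"
      using True by (simp add: bond_edge_def bond_val_def bond_outder_def)
    have "z c * ((f c 0 - \<i> * (df c 0 / complex_of_real k)) / 2) = (?X * (f c 0 - (\<i> / complex_of_real k) * df c 0)) / 2"
      unfolding zc by simp
    also have "\<dots> = (f c (l c) - (\<i> / complex_of_real k) * df c (l c)) / 2"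
      unfolding E(2)[OF True, symmetric] ..
    also have "\<dots> = (f c (l c) + \<i> * (- df c (l c) / complex_of_real k)) / 2"
      by simp
    finally show ?thesis using lhs w by simp
  next
    case False
    define e where "e = c - N"
    have e: "e < N" using False c by (simp add: e_def)
    let ?X = "exp (\<i> * complex_of_real (k * l e))"
    have ze: "z e = ?X" using z e by simp
    have w: "wvec N l k f df $ c = (f e 0 + \<i> * (df e 0 / complex_of_real k)) / 2"
      using False c e unfolding e_def by (simp add: wvec_def bond_rev_def bond_val_def bond_outder_def)
    have lhs: "z (bond_edge N c) * ((bond_val N l f c - \<i> * (bond_outder N l df c / complex_of_real k)) / 2)
        = z e * ((f e (l e) - \<i> * (- df e (l e) / complex_of_real k)) / 2)"
      using False by (simp add: bond_edge_def bond_val_def bond_outder_def e_def)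
    have "z e * ((f e (l e) - \<i> * (- df e (l e) / complex_of_real k)) / 2) = (?X * (f e (l e) + (\<i> / complex_of_real k) * df e (l e))) / 2"
      unfolding ze by simp
    also have "\<dots> = (f e 0 + (\<i> / complex_of_real k) * df e 0) / 2"
      unfolding E(1)[OF e] ..
    also have "\<dots> = (f e 0 + \<i> * (df e 0 / complex_of_real k)) / 2"
      by simp
    finally show ?thesis using lhs w by simp
  qed
qed

lemma J_entry: "b < 2*N \<Longrightarrow> c < 2*N \<Longrightarrow> Jmat N $$ (b,c) = (if c = bond_rev N b then 1 else 0)"
  by (simp add: Jmat_def)

lemma M_entry: "r < 4*N \<Longrightarrow> c < 2*N \<Longrightarrow> Mmat orig tgt N $$ (r,c) =
   (if r < 2*N then scat orig tgt N $$ (r,c) + Jmat N $$ (r,c)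
    else \<i> * (scat orig tgt N $$ (r - 2*N, c) - Jmat N $$ (r - 2*N, c)))"
  by (simp add: Mmat_def)

lemma sumJ: assumes r: "r < 2*N" shows "(\<Sum>c<2*N. Jmat N $$ (r,c) * w $ c) = w $ bond_rev N r"
proof -
  have "(\<Sum>c<2*N. Jmat N $$ (r,c) * w $ c) = (\<Sum>c<2*N. if c = bond_rev N r then w $ c else 0)"
    by (intro sum.cong refl) (simp add: J_entry r)
  also have "\<dots> = w $ bond_rev N r" using rev_lt[OF r] by simp
  finally show ?thesis .
qed

lemma trace_kernel:
  assumes tr: "(z, x) \<in> trace_space orig tgt N"
  shows "\<exists>w \<in> carrier_vec (2*N). Mmat orig tgt N *\<^sub>v w = x \<and> Bm orig tgt N z *\<^sub>v w = 0\<^sub>v (2*N)"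
proof -
  obtain l k f df where lpos: "\<forall>e<N. l e > 0" and k: "k > 0" and eig: "is_eigenpair orig tgt N l k f df"
    and z: "\<forall>e<N. z e = exp (\<i> * complex_of_real (k * l e))" and x: "x = trace_vec N l k f df"
    using tr unfolding trace_space_def by blast
  define w where "w = wvec N l k f df"
  have wc: "w \<in> carrier_vec (2*N)" by (simp add: w_def wvec_def)
  define pv where "pv b = bond_val N l f b" for b
  define qv where "qv b = bond_outder N l df b / complex_of_real k" for b
  have wr: "w $ bond_rev N r = (pv r + \<i> * qv r) / 2" if r: "r < 2*N" for r
    using r by (simp add: w_def wvec_def rev_lt rev_rev pv_def qv_def)
  have Sw: "(\<Sum>c<2*N. scat orig tgt N $$ (r,c) * w $ c) = (pv r - \<i> * qv r) / 2" if r: "r < 2*N" for r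
    unfolding w_def pv_def qv_def by (rule vertex_rel[OF eig r])
  have Bw: "Bm orig tgt N z *\<^sub>v w = 0\<^sub>v (2*N)"
  proof (rule eq_vecI)
    fix c assume "c < dim_vec (0\<^sub>v (2*N) :: complex vec)"
    then have c: "c < 2*N" by simp
    have "(Bm orig tgt N z *\<^sub>v w) $ c = (\<Sum>j<2*N. Bm orig tgt N z $$ (c,j) * w $ j)"
      by (rule mv_entry[OF B_carrier wc c])
    also have "\<dots> = (\<Sum>j<2*N. (if c = j then w $ j else 0) - z (bond_edge N c) * (scat orig tgt N $$ (c,j) * w $ j))"
    proof (intro sum.cong refl)
      fix j assume "j \<in> {..<2*N}" then have j: "j < 2*N" by simp
      show "Bm orig tgt N z $$ (c,j) * w $ j = (if c = j then w $ j else 0) - z (bond_edge N c) * (scat orig tgt N $$ (c,j) * w $ j)"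
        unfolding B_entry[OF c j] by (simp add: algebra_simps)
    qed
    also have "\<dots> = w $ c - z (bond_edge N c) * (\<Sum>j<2*N. scat orig tgt N $$ (c,j) * w $ j)"
      using c by (simp add: sum_subtractf sum_distrib_left)
    also have "\<dots> = w $ c - z (bond_edge N c) * ((pv c - \<i> * qv c) / 2)" by (simp add: Sw c)
    also have "z (bond_edge N c) * ((pv c - \<i> * qv c) / 2) = w $ c"
      unfolding pv_def qv_def w_def by (rule edge_rel[OF eig lpos k z c])
    finally show "(Bm orig tgt N z *\<^sub>v w) $ c = (0\<^sub>v (2*N) :: complex vec) $ c" using c by simp
  qed (simp add: Umat_def)
  have Mw: "Mmat orig tgt N *\<^sub>v w = x"
  proof (rule eq_vecI)
    show "dim_vec (Mmat orig tgt N *\<^sub>v w) = dim_vec x" by (simp add: x Mmat_def trace_vec_def)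
    fix r assume "r < dim_vec x"
    then have r: "r < 4*N" by (simp add: x trace_vec_def)
    have "(Mmat orig tgt N *\<^sub>v w) $ r = (\<Sum>j<2*N. Mmat orig tgt N $$ (r,j) * w $ j)"
      by (rule mv_entry[OF Mmat_carrier wc r])
    also have "\<dots> = x $ r"
    proof (cases "r < 2*N")
      case True
      have "(\<Sum>j<2*N. Mmat orig tgt N $$ (r,j) * w $ j) =
          (\<Sum>j<2*N. scat orig tgt N $$ (r,j) * w $ j) + (\<Sum>j<2*N. Jmat N $$ (r,j) * w $ j)"
      proof -
        have "(\<Sum>j<2*N. Mmat orig tgt N $$ (r,j) * w $ j) =
          (\<Sum>j<2*N. scat orig tgt N $$ (r,j) * w $ j + Jmat N $$ (r,j) * w $ j)"
        proof (intro sum.cong refl)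
          fix j assume "j \<in> {..<2*N}" then have j: "j < 2*N" by simp
          show "Mmat orig tgt N $$ (r,j) * w $ j = scat orig tgt N $$ (r,j) * w $ j + Jmat N $$ (r,j) * w $ j"
            unfolding M_entry[OF r j] using True by (simp add: distrib_right)
        qed
        then show ?thesis by (simp add: sum.distrib)
      qed
      also have "\<dots> = pv r" unfolding Sw[OF True] sumJ[OF True] wr[OF True] by (simp add: field_simps)
      finally show ?thesis using True by (simp add: x trace_vec_def pv_def)
    next
      case False
      define r' where "r' = r - 2*N"
      have r': "r' < 2*N" using r False by (simp add: r'_def)
      have "(\<Sum>j<2*N. Mmat orig tgt N $$ (r,j) * w $ j) =
          \<i> * ((\<Sum>j<2*N. scat orig tgt N $$ (r',j) * w $ j) - (\<Sum>j<2*N. Jmat N $$ (r',j) * w $ j))"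
      proof -
        have "(\<Sum>j<2*N. Mmat orig tgt N $$ (r,j) * w $ j) =
          (\<Sum>j<2*N. \<i> * (scat orig tgt N $$ (r',j) * w $ j - Jmat N $$ (r',j) * w $ j))"
        proof (intro sum.cong refl)
          fix j assume "j \<in> {..<2*N}" then have j: "j < 2*N" by simp
          show "Mmat orig tgt N $$ (r,j) * w $ j = \<i> * (scat orig tgt N $$ (r',j) * w $ j - Jmat N $$ (r',j) * w $ j)"
            unfolding M_entry[OF r j] using False by (simp add: r'_def left_diff_distrib)
        qed
        then show ?thesis by (simp add: right_diff_distrib sum_subtractf sum_distrib_left)
      qed
      also have "\<dots> = qv r'" unfolding Sw[OF r'] sumJ[OF r'] wr[OF r'] by (simp add: field_simps)
      finally show ?thesis using False r by (simp add: x trace_vec_def qv_def r'_def)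
    qed
    finally show "(Mmat orig tgt N *\<^sub>v w) $ r = x $ r" .
  qed
  show ?thesis using wc Mw Bw by blast
qed

lemma Amat_dims: "Amat orig tgt N z \<in> carrier_mat (4*N) (4*N)"
  unfolding Amat_def
  by (rule mult_carrier_mat[OF mult_carrier_mat[OF Mmat_carrier adj_mat(1)[OF B_carrier]] adjoint_carrier[OF Mmat_carrier]])

lemma adj_zero_or_rank1:
  assumes tor: "z \<in> torus N" and det0: "secular_poly orig tgt N z = 0"
    and q: "q \<in> carrier_vec (2*N)" "q \<noteq> 0\<^sub>v (2*N)" "Bm orig tgt N z *\<^sub>v q = 0\<^sub>v (2*N)"
  shows "adj_mat (Bm orig tgt N z) = 0\<^sub>m (2*N) (2*N) \<or>
    (\<exists>\<gamma>. \<gamma> \<noteq> 0 \<and> (\<forall>i<2*N. \<forall>j<2*N. adj_mat (Bm orig tgt N z) $$ (i,j) = \<gamma> * q$i * cnj (q$j)))"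
proof (cases "\<exists>v\<in>carrier_vec (2*N). Bm orig tgt N z *\<^sub>v v = 0\<^sub>v (2*N) \<and> (\<forall>t. v \<noteq> t \<cdot>\<^sub>v q)")
  case True
  then obtain v where v: "v \<in> carrier_vec (2*N)" "Bm orig tgt N z *\<^sub>v v = 0\<^sub>v (2*N)" "\<forall>t. v \<noteq> t \<cdot>\<^sub>v q" by blast
  have "adj_mat (Bm orig tgt N z) = 0\<^sub>m (2*N) (2*N)" by (rule adj_zero[OF B_carrier q v])
  then show ?thesis by blast
next
  case False
  then have span: "\<forall>v\<in>carrier_vec (2*N). Bm orig tgt N z *\<^sub>v v = 0\<^sub>v (2*N) \<longrightarrow> (\<exists>t. v = t \<cdot>\<^sub>v q)" by blast
  have d: "det (Bm orig tgt N z) = 0" using det0 by (simp add: secular_poly_def)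
  obtain \<gamma> where g: "\<forall>i<2*N. \<forall>j<2*N. adj_mat (Bm orig tgt N z) $$ (i,j) = \<gamma> * q$i * cnj (q$j)"
    using adj_rank1[OF B_carrier d q(1,2) span adjker[OF tor]] by blast
  show ?thesis
  proof (cases "\<gamma> = 0")
    case True
    have "adj_mat (Bm orig tgt N z) = 0\<^sub>m (2*N) (2*N)"
      using g True adj_mat(1)[OF B_carrier[of N orig tgt z]] by (intro eq_matI) auto
    then show ?thesis by blast
  next
    case False then show ?thesis using g by blast
  qed
qed

lemma part2: assumes "z \<in> sigma_sing orig tgt N" shows "Amat orig tgt N z = 0\<^sub>m (4*N) (4*N)"
proof -
  have tor: "z \<in> torus N" and P0: "secular_poly orig tgt N z = 0"
    and D0: "\<forall>e<N. pderiv_z (secular_poly orig tgt N) e z = 0"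
    using assms by (auto simp: sigma_sing_def)
  have d: "det (Bm orig tgt N z) = 0" using P0 by (simp add: secular_poly_def)
  obtain q where q: "q \<in> carrier_vec (2*N)" "q \<noteq> 0\<^sub>v (2*N)" "Bm orig tgt N z *\<^sub>v q = 0\<^sub>v (2*N)"
    using det_0_iff_vec_prod_zero[OF B_carrier] d by blast
  have adj0: "adj_mat (Bm orig tgt N z) = 0\<^sub>m (2*N) (2*N)"
  proof -
    from adj_zero_or_rank1[OF tor P0 q] show ?thesis
    proof
      assume "\<exists>\<gamma>. \<gamma> \<noteq> 0 \<and> (\<forall>i<2*N. \<forall>j<2*N. adj_mat (Bm orig tgt N z) $$ (i,j) = \<gamma> * q$i * cnj (q$j))"
      then obtain \<gamma> where g0: "\<gamma> \<noteq> 0" and X: "\<forall>i<2*N. \<forall>j<2*N. adj_mat (Bm orig tgt N z) $$ (i,j) = \<gamma> * q$i * cnj (q$j)"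
        by blast
      show ?thesis using pderiv_nonzero[OF X q(1) q(3) q(2) g0] D0 by blast
    qed
  qed
  show ?thesis
  proof (rule eq_matI)
    fix i j assume "i < dim_row (0\<^sub>m (4*N) (4*N) :: complex mat)" "j < dim_col (0\<^sub>m (4*N) (4*N) :: complex mat)"
    then have ij: "i < 4*N" "j < 4*N" by auto
    show "Amat orig tgt N z $$ (i,j) = (0\<^sub>m (4*N) (4*N) :: complex mat) $$ (i,j)"
      unfolding Amat_entry[OF ij] adj0 using ij by simp
  qed (use Amat_dims[of orig tgt N z] in auto)
qed

lemma part3:
  assumes reg: "z \<in> sigma_reg orig tgt N" and x0: "x \<noteq> 0\<^sub>v (4*N)" and tr: "(z, x) \<in> trace_space orig tgt N"
  shows "\<exists>c. c \<noteq> 0 \<and> Amat orig tgt N z = c \<cdot>\<^sub>m mat (4*N) (4*N) (\<lambda>(i,j). x $ i * cnj (x $ j))"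
proof -
  have tor: "z \<in> torus N" and P0: "secular_poly orig tgt N z = 0"
    and D: "\<exists>e<N. pderiv_z (secular_poly orig tgt N) e z \<noteq> 0"
    using reg by (auto simp: sigma_reg_def)
  obtain w where w: "w \<in> carrier_vec (2*N)" and Mw: "Mmat orig tgt N *\<^sub>v w = x"
    and Bw: "Bm orig tgt N z *\<^sub>v w = 0\<^sub>v (2*N)"
    using trace_kernel[OF tr] by blast
  have w0: "w \<noteq> 0\<^sub>v (2*N)"
  proof
    assume "w = 0\<^sub>v (2*N)"
    then have "x = Mmat orig tgt N *\<^sub>v 0\<^sub>v (2*N)" using Mw by simp
    also have "\<dots> = 0\<^sub>v (4*N)" by (intro eq_vecI) (auto simp: Mmat_def scalar_prod_def)
    finally show False using x0 by simp
  qed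
  have "adj_mat (Bm orig tgt N z) \<noteq> 0\<^sub>m (2*N) (2*N)"
    using pderiv_adj0 D by blast
  then obtain \<gamma> where g0: "\<gamma> \<noteq> 0" and g: "\<forall>i<2*N. \<forall>j<2*N. adj_mat (Bm orig tgt N z) $$ (i,j) = \<gamma> * w$i * cnj (w$j)"
    using adj_zero_or_rank1[OF tor P0 w w0 Bw] by blast
  have xi: "x $ i = (\<Sum>a<2*N. Mmat orig tgt N $$ (i,a) * w $ a)" if "i < 4*N" for i
    using mv_entry[OF Mmat_carrier[of orig tgt N] w that] Mw by simp
  have "Amat orig tgt N z = \<gamma> \<cdot>\<^sub>m mat (4*N) (4*N) (\<lambda>(i,j). x $ i * cnj (x $ j))"
  proof (rule eq_matI)
    fix i j assume "i < dim_row (\<gamma> \<cdot>\<^sub>m mat (4*N) (4*N) (\<lambda>(i,j). x $ i * cnj (x $ j)))"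
        "j < dim_col (\<gamma> \<cdot>\<^sub>m mat (4*N) (4*N) (\<lambda>(i,j). x $ i * cnj (x $ j)))"
    then have ij: "i < 4*N" "j < 4*N" by auto
    have "Amat orig tgt N z $$ (i,j) = (\<Sum>b<2*N. (\<Sum>a<2*N. Mmat orig tgt N $$ (i,a) * (\<gamma> * w$a * cnj (w$b))) * cnj (Mmat orig tgt N $$ (j,b)))"
      unfolding Amat_entry[OF ij] using g by (intro sum.cong refl) auto
    also have "\<dots> = (\<Sum>b<2*N. (\<gamma> * x$i) * cnj (Mmat orig tgt N $$ (j,b) * w$b))"
    proof (intro sum.cong refl)
      fix b
      have "(\<Sum>a<2*N. Mmat orig tgt N $$ (i,a) * (\<gamma> * w$a * cnj (w$b))) = (\<gamma> * cnj (w$b)) * (\<Sum>a<2*N. Mmat orig tgt N $$ (i,a) * w $ a)"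
        by (simp add: sum_distrib_left algebra_simps)
      then show "(\<Sum>a<2*N. Mmat orig tgt N $$ (i,a) * (\<gamma> * w$a * cnj (w$b))) * cnj (Mmat orig tgt N $$ (j,b)) = (\<gamma> * x$i) * cnj (Mmat orig tgt N $$ (j,b) * w$b)"
        using xi[OF ij(1)] by simp
    qed
    also have "\<dots> = (\<gamma> * x$i) * cnj (\<Sum>b<2*N. Mmat orig tgt N $$ (j,b) * w$b)"
      by (simp add: sum_distrib_left cnj_sum)
    also have "\<dots> = (\<gamma> \<cdot>\<^sub>m mat (4*N) (4*N) (\<lambda>(i,j). x $ i * cnj (x $ j))) $$ (i,j)"
      using ij xi[OF ij(2)] by simp
    finally show "Amat orig tgt N z $$ (i,j) = (\<gamma> \<cdot>\<^sub>m mat (4*N) (4*N) (\<lambda>(i,j). x $ i * cnj (x $ j))) $$ (i,j)" .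
  qed (use Amat_dims[of orig tgt N z] in auto)
  then show ?thesis using g0 by blast
qed

theorem mainTheorem9:
  fixes orig tgt :: "nat \<Rightarrow> 'v" and N :: nat
  shows "(\<forall>i<4*N. \<forall>j<4*N. poly_fun N (\<lambda>z. Amat orig tgt N z $$ (i,j)))
    \<and> (\<forall>z\<in>sigma_sing orig tgt N. Amat orig tgt N z = 0\<^sub>m (4*N) (4*N))
    \<and> (\<forall>z\<in>sigma_reg orig tgt N. \<forall>x. x \<noteq> 0\<^sub>v (4*N) \<and> (z, x) \<in> trace_space orig tgt N \<longrightarrow>
         (\<exists>c. c \<noteq> 0 \<and> Amat orig tgt N z =
            c \<cdot>\<^sub>m mat (4*N) (4*N) (\<lambda>(i,j). x $ i * cnj (x $ j))))"
  using part1 part2 part3 by blast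


end
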